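(* Let $G$ be a diamond-free graph and $S$ a degree-greedy stable set in $G$. Then $G$ is edge simplicial if and only if the multigraph $G_S$ equals $G-S$ (same vertex set and same multiset of edges; in particular $G_S$ has no repeated edges).
   Context: A vertex $v$ is simplicial if $N[v]$ is a clique; a clique is simplicial if it equals $N[v]$ for a simplicial vertex $v$. $G$ is edge simplicial if every edge is contained in a simplicial clique. For a linear order $\sigma=(v_1,\dots,v_n)$ of $V(G)$, the $\sigma$-greedy stable set is obtained by scanning $v_1,\dots,v_n$ in order, starting with $S=\emptyset$, and adding $v_i$ to $S$ whenever $S\cup\{v_i\}$ is stable; a degree-greedy stable set is a $\sigma$-greedy stable set for an order with $d_G(v_i)\le d_G(v_j)$ for $i<j$. For a stable set $S$, $G_S$ is the multigraph with vertex set $V(G)\setminus S$ and edge multiset $\biguplus_{v\in S}\{xy: x\ne y,\ x,y\in N_G(v)\}$ (multiset union, one copy per $v$). The diamond is $K_4$ minus one edge; diamond-free means no induced diamond. *)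

theory Defs
  imports Main "HOL-Library.Multiset"
begin

definition graph :: "'a set \<Rightarrow> 'a set set \<Rightarrow> bool" where
  "graph V E \<longleftrightarrow> finite V \<and> (\<forall>e\<in>E. \<exists>x y. x \<noteq> y \<and> x \<in> V \<and> y \<in> V \<and> e = {x, y})"

definition adj :: "'a set set \<Rightarrow> 'a \<Rightarrow> 'a \<Rightarrow> bool" where
  "adj E x y \<longleftrightarrow> x \<noteq> y \<and> {x, y} \<in> E"

definition nbhd :: "'a set \<Rightarrow> 'a set set \<Rightarrow> 'a \<Rightarrow> 'a set" where
  "nbhd V E v = {u \<in> V. adj E v u}"

definition cnbhd :: "'a set \<Rightarrow> 'a set set \<Rightarrow> 'a \<Rightarrow> 'a set" where
  "cnbhd V E v = insert v (nbhd V E v)"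

definition degree :: "'a set \<Rightarrow> 'a set set \<Rightarrow> 'a \<Rightarrow> nat" where
  "degree V E v = card (nbhd V E v)"

definition clique :: "'a set set \<Rightarrow> 'a set \<Rightarrow> bool" where
  "clique E C \<longleftrightarrow> (\<forall>x\<in>C. \<forall>y\<in>C. x \<noteq> y \<longrightarrow> adj E x y)"

definition stable :: "'a set set \<Rightarrow> 'a set \<Rightarrow> bool" where
  "stable E S \<longleftrightarrow> (\<forall>x\<in>S. \<forall>y\<in>S. \<not> adj E x y)"

definition simplicial_vertex :: "'a set \<Rightarrow> 'a set set \<Rightarrow> 'a \<Rightarrow> bool" where
  "simplicial_vertex V E v \<longleftrightarrow> v \<in> V \<and> clique E (cnbhd V E v)"

definition simplicial_clique :: "'a set \<Rightarrow> 'a set set \<Rightarrow> 'a set \<Rightarrow> bool" where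
  "simplicial_clique V E C \<longleftrightarrow> (\<exists>v. simplicial_vertex V E v \<and> C = cnbhd V E v)"

definition edge_simplicial :: "'a set \<Rightarrow> 'a set set \<Rightarrow> bool" where
  "edge_simplicial V E \<longleftrightarrow> (\<forall>e\<in>E. \<exists>C. simplicial_clique V E C \<and> e \<subseteq> C)"

definition diamond_free :: "'a set \<Rightarrow> 'a set set \<Rightarrow> bool" where
  "diamond_free V E \<longleftrightarrow> \<not> (\<exists>a\<in>V. \<exists>b\<in>V. \<exists>c\<in>V. \<exists>d\<in>V. distinct [a, b, c, d] \<and>
      adj E a b \<and> adj E a c \<and> adj E a d \<and> adj E b c \<and> adj E b d \<and> \<not> adj E c d)"

fun greedy_aux :: "'a set set \<Rightarrow> 'a set \<Rightarrow> 'a list \<Rightarrow> 'a set" where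
  "greedy_aux E S [] = S"
| "greedy_aux E S (v # vs) =
     greedy_aux E (if stable E (insert v S) then insert v S else S) vs"

definition greedy_stable :: "'a set set \<Rightarrow> 'a list \<Rightarrow> 'a set" where
  "greedy_stable E \<sigma> = greedy_aux E {} \<sigma>"

definition degree_greedy_stable :: "'a set \<Rightarrow> 'a set set \<Rightarrow> 'a set \<Rightarrow> bool" where
  "degree_greedy_stable V E S \<longleftrightarrow> (\<exists>\<sigma>. distinct \<sigma> \<and> set \<sigma> = V \<and>
      sorted_wrt (\<lambda>u w. degree V E u \<le> degree V E w) \<sigma> \<and> S = greedy_stable E \<sigma>)"

text \<open>Edge multiset of the multigraph G_S (vertex set V - S).\<close>
definition GS_edges :: "'a set \<Rightarrow> 'a set set \<Rightarrow> 'a set \<Rightarrow> 'a set multiset" where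
  "GS_edges V E S = (\<Sum>v\<in>S. mset_set {{x, y} | x y. x \<noteq> y \<and> x \<in> nbhd V E v \<and> y \<in> nbhd V E v})"

definition del_edges :: "'a set \<Rightarrow> 'a set set \<Rightarrow> 'a set \<Rightarrow> 'a set multiset" where
  "del_edges V E S = mset_set {e \<in> E. e \<inter> S = {}}"

end

theory Submission
  imports Defs
begin

lemma adj_sym: "adj E x y = adj E y x"
  by (auto simp: adj_def insert_commute)

lemma greedy_split: "greedy_aux E S (pre @ vs) = greedy_aux E (greedy_aux E S pre) vs"
  by (induction pre arbitrary: S) auto

lemma greedy_mono: "S \<subseteq> greedy_aux E S vs"
proof (induction vs arbitrary: S)
  case (Cons a vs)
  have "S \<subseteq> (if stable E (insert a S) then insert a S else S)" by auto
  then show ?case using Cons.IH[of "(if stable E (insert a S) then insert a S else S)"] by simp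
qed simp

lemma greedy_sub: "greedy_aux E S vs \<subseteq> S \<union> set vs"
proof (induction vs arbitrary: S)
  case (Cons a vs)
  have "greedy_aux E S (a#vs) \<subseteq> (if stable E (insert a S) then insert a S else S) \<union> set vs"
    using Cons.IH by simp
  then show ?case by (auto split: if_splits)
qed simp

lemma greedy_pres: "stable E S \<Longrightarrow> stable E (greedy_aux E S vs)"
proof (induction vs arbitrary: S)
  case (Cons a vs)
  have "stable E (if stable E (insert a S) then insert a S else S)" using Cons.prems by simp
  then show ?case using Cons.IH by simp
qed simp

lemma greedy_key:
  assumes "stable E S"
  shows "w \<in> greedy_aux E S (pre @ w # post) \<or>
    (\<exists>u \<in> greedy_aux E S (pre @ w # post). u \<in> S \<union> set pre \<and> adj E u w)"
proof -
  define T where "T = greedy_aux E S pre"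
  have R: "greedy_aux E S (pre @ w # post) = greedy_aux E (if stable E (insert w T) then insert w T else T) post"
    by (simp add: greedy_split T_def)
  have Ts: "stable E T" unfolding T_def by (rule greedy_pres[OF assms])
  have Tsub: "T \<subseteq> S \<union> set pre" unfolding T_def by (rule greedy_sub)
  show ?thesis
  proof (cases "stable E (insert w T)")
    case True
    have "w \<in> greedy_aux E (insert w T) post" using greedy_mono[of "insert w T" E post] by blast
    then show ?thesis using R True by simp
  next
    case False
    then obtain a b where ab: "a \<in> insert w T" "b \<in> insert w T" "adj E a b"
      unfolding stable_def by blast
    have "\<exists>u\<in>T. adj E u w"
    proof (cases "a = w")
      case True
      then have "b \<noteq> w" using ab(3) by (auto simp: adj_def)
      then have "b \<in> T" using ab(2) by blast
      moreover have "adj E b w" using ab(3) True adj_sym by metis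
      ultimately show ?thesis by blast
    next
      case False
      then have aT: "a \<in> T" using ab(1) by blast
      have "b \<notin> T" using Ts aT ab(3) unfolding stable_def by blast
      then have "b = w" using ab(2) by blast
      then show ?thesis using aT ab(3) by blast
    qed
    then obtain u where "u \<in> T" "adj E u w" by blast
    moreover have "u \<in> greedy_aux E T post" using greedy_mono[of T E post] \<open>u \<in> T\<close> by blast
    then have "u \<in> greedy_aux E S (pre @ w # post)" using R False by simp
    ultimately show ?thesis using Tsub by blast
  qed
qed

lemma graph_edge: "graph V E \<Longrightarrow> e \<in> E \<Longrightarrow> \<exists>x y. x \<noteq> y \<and> x \<in> V \<and> y \<in> V \<and> e = {x,y}"
  by (auto simp: graph_def)

lemma finite_P:
  assumes "graph V E"
  shows "finite {{x, y} | x y. x \<noteq> y \<and> x \<in> nbhd V E v \<and> y \<in> nbhd V E v}"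
proof -
  have "finite (Pow V)" using assms by (auto simp: graph_def)
  moreover have "{{x, y} | x y. x \<noteq> y \<and> x \<in> nbhd V E v \<and> y \<in> nbhd V E v} \<subseteq> Pow V"
    by (auto simp: nbhd_def)
  ultimately show ?thesis by (rule finite_subset[rotated])
qed

lemma simpl_of_nbhd_clique:
  assumes "v \<in> V" "\<And>x y. x \<in> nbhd V E v \<Longrightarrow> y \<in> nbhd V E v \<Longrightarrow> x \<noteq> y \<Longrightarrow> adj E x y"
  shows "simplicial_vertex V E v"
  unfolding simplicial_vertex_def clique_def
proof (intro conjI ballI impI)
  fix x y assume x: "x \<in> cnbhd V E v" and y: "y \<in> cnbhd V E v" and xy: "x \<noteq> y"
  show "adj E x y"
  proof (cases "x = v")
    case True
    then show ?thesis using y xy by (simp add: cnbhd_def nbhd_def)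
  next
    case False
    note xn = this
    then have xN: "x \<in> nbhd V E v" using x by (simp add: cnbhd_def)
    show ?thesis
    proof (cases "y = v")
      case True
      then have "adj E v x" using xN by (simp add: nbhd_def)
      then show ?thesis using True adj_sym by metis
    next
      case False
      then have "y \<in> nbhd V E v" using y by (simp add: cnbhd_def)
      then show ?thesis using assms(2) xN xy by blast
    qed
  qed
qed (fact assms(1))

theorem lemma10:
  fixes V :: "'a set" and E :: "'a set set" and S :: "'a set"
  assumes "graph V E"
    and "diamond_free V E"
    and "degree_greedy_stable V E S"
  shows "edge_simplicial V E \<longleftrightarrow> GS_edges V E S = del_edges V E S"
proof -
  obtain \<sigma> where sig: "distinct \<sigma>" "set \<sigma> = V"
    "sorted_wrt (\<lambda>u w. degree V E u \<le> degree V E w) \<sigma>" "S = greedy_aux E {} \<sigma>"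
    using assms(3) unfolding degree_greedy_stable_def greedy_stable_def by blast
  have finV: "finite V" using assms(1) by (simp add: graph_def)
  have SV: "S \<subseteq> V" using greedy_sub[of E "{}" \<sigma>] sig by auto
  have finS: "finite S" using SV finV finite_subset by blast
  have stS: "stable E S" using greedy_pres[of E "{}" \<sigma>] sig by (simp add: stable_def)
  have EV: "E \<subseteq> Pow V" using assms(1) by (auto simp: graph_def)
  have finE: "finite E" using EV finV by (meson finite_Pow_iff finite_subset)
  define P where "P v = {{x, y} | x y. x \<noteq> y \<and> x \<in> nbhd V E v \<and> y \<in> nbhd V E v}" for v
  have finP: "finite (P v)" for v unfolding P_def using finite_P[OF assms(1)] .
  have GS: "GS_edges V E S = (\<Sum>v\<in>S. mset_set (P v))" unfolding GS_edges_def P_def by simp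
  have countGS: "count (GS_edges V E S) e = card {v\<in>S. e \<in> P v}" for e
  proof -
    have "count (GS_edges V E S) e = (\<Sum>v\<in>S. if e \<in> P v then 1 else 0)"
      unfolding GS by (simp add: count_sum finP count_mset_set')
    also have "\<dots> = card {v\<in>S. e \<in> P v}"
      using finS by (simp add: sum.If_cases Int_def)
    finally show ?thesis .
  qed
  have countDel: "count (del_edges V E S) e = (if e \<in> E \<and> e \<inter> S = {} then 1 else 0)" for e
    unfolding del_edges_def using finE by auto
  show ?thesis
  proof
    assume es: "edge_simplicial V E"
    have Ssimp: "adj E x y" if v: "v \<in> S" and x: "x \<in> nbhd V E v" and y: "y \<in> nbhd V E v"
      and xy: "x \<noteq> y" for v x y
    proof (rule ccontr)
      assume nxy: "\<not> adj E x y"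
      have "{v, x} \<in> E" using x by (auto simp: nbhd_def adj_def)
      then obtain C where C: "simplicial_clique V E C" "{v,x} \<subseteq> C"
        using es unfolding edge_simplicial_def by blast
      then obtain w where w: "simplicial_vertex V E w" "C = cnbhd V E w"
        unfolding simplicial_clique_def by blast
      have cl: "clique E (cnbhd V E w)" and wV: "w \<in> V" using w(1) by (auto simp: simplicial_vertex_def)
      have vV: "v \<in> V" using v SV by blast
      have sub: "cnbhd V E w \<subseteq> cnbhd V E v"
      proof
        fix z assume z: "z \<in> cnbhd V E w"
        show "z \<in> cnbhd V E v"
        proof (cases "z = v")
          case False
          have "v \<in> cnbhd V E w" using C w by auto
          then have "adj E v z" using cl z False unfolding clique_def by (metis)
          moreover have "z \<in> V" using z wV by (auto simp: cnbhd_def nbhd_def)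
          ultimately show ?thesis by (auto simp: cnbhd_def nbhd_def)
        qed (simp add: cnbhd_def)
      qed
      have yn: "y \<notin> cnbhd V E w"
      proof
        assume "y \<in> cnbhd V E w"
        moreover have "x \<in> cnbhd V E w" using C w by auto
        ultimately show False using cl xy nxy unfolding clique_def by blast
      qed
      have yv: "y \<in> cnbhd V E v" using y by (simp add: cnbhd_def)
      have finC: "finite (cnbhd V E v)" using finV vV by (auto simp: cnbhd_def nbhd_def)
      have "card (cnbhd V E w) < card (cnbhd V E v)"
        by (rule psubset_card_mono[OF finC]) (use sub yn yv in blast)
      moreover have "card (cnbhd V E u) = Suc (degree V E u)" if "u \<in> V" for u
      proof -
        have "finite (nbhd V E u)" using finV by (auto simp: nbhd_def)
        moreover have "u \<notin> nbhd V E u" by (simp add: nbhd_def adj_def)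
        ultimately show ?thesis by (simp add: cnbhd_def degree_def)
      qed
      ultimately have dlt: "degree V E w < degree V E v" using wV vV by simp
      have "w \<in> set \<sigma>" using wV sig by simp
      then obtain pre post where sp: "\<sigma> = pre @ w # post" by (meson split_list)
      have vpre: "v \<notin> set pre"
      proof
        assume "v \<in> set pre"
        then have "degree V E v \<le> degree V E w" using sig(3) sp by (simp add: sorted_wrt_append)
        then show False using dlt by simp
      qed
      have "w \<noteq> v"
      proof
        assume "w = v"
        then have "x \<in> cnbhd V E w" "y \<in> cnbhd V E w" using x y by (auto simp: cnbhd_def)
        then show False using cl xy nxy unfolding clique_def by blast
      qed
      have "w \<in> S \<or> (\<exists>u\<in>S. u \<in> set pre \<and> adj E u w)"
        using greedy_key[of E "{}" w pre post] sig(4) sp by (simp add: stable_def)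
      then obtain u where u: "u \<in> S" "u \<in> cnbhd V E w" "u \<noteq> v"
      proof
        assume "w \<in> S" then show ?thesis using that \<open>w \<noteq> v\<close> by (auto simp: cnbhd_def)
      next
        assume "\<exists>u\<in>S. u \<in> set pre \<and> adj E u w"
        then obtain u where "u \<in> S" "u \<in> set pre" "adj E u w" by blast
        moreover have "u \<in> V" using \<open>u \<in> S\<close> SV by blast
        ultimately show ?thesis using that vpre
          by (auto simp: cnbhd_def nbhd_def adj_sym)
      qed
      have "u \<in> cnbhd V E v" using u sub by blast
      then have "adj E v u" using u(3) by (simp add: cnbhd_def nbhd_def)
      then show False using stS v u(1) unfolding stable_def by blast
    qed
    show "GS_edges V E S = del_edges V E S"
    proof (rule multiset_eqI)
      fix e
      show "count (GS_edges V E S) e = count (del_edges V E S) e"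
      proof (cases "e \<in> E \<and> e \<inter> S = {}")
        case True
        then obtain x y where xy: "x \<noteq> y" "x \<in> V" "y \<in> V" "e = {x,y}"
          using graph_edge[OF assms(1)] by blast
        have axy: "adj E x y" using True xy by (simp add: adj_def)
        have xS: "x \<notin> S" "y \<notin> S" using True xy by auto
        obtain C where C: "simplicial_clique V E C" "e \<subseteq> C"
          using es True unfolding edge_simplicial_def by blast
        then obtain w where w: "simplicial_vertex V E w" "C = cnbhd V E w"
          unfolding simplicial_clique_def by blast
        have cl: "clique E (cnbhd V E w)" and wV: "w \<in> V" using w(1) by (auto simp: simplicial_vertex_def)
        have "w \<in> S \<or> (\<exists>u\<in>S. adj E u w)"
        proof -
          obtain pre post where "\<sigma> = pre @ w # post" using wV sig by (metis split_list)
          moreover have "stable E {}" by (simp add: stable_def)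
          ultimately show ?thesis using greedy_key[of E "{}" w pre post] sig(4) by (simp, blast)
        qed
        then obtain v0 where v0: "v0 \<in> S" "v0 \<in> cnbhd V E w"
        proof
          assume "w \<in> S" then show ?thesis using that by (simp add: cnbhd_def)
        next
          assume "\<exists>u\<in>S. adj E u w"
          then obtain u where u: "u \<in> S" "adj E u w" by blast
          then have "u \<in> V" using SV by blast
          moreover have "adj E w u" using u(2) adj_sym by metis
          ultimately have "u \<in> cnbhd V E w" by (simp add: cnbhd_def nbhd_def)
          then show ?thesis using that u(1) by blast
        qed
        have v0V: "v0 \<in> V" using v0 SV by blast
        have xC: "x \<in> cnbhd V E w" "y \<in> cnbhd V E w" using C(2) w(2) xy(4) by blast+
        have "v0 \<noteq> x" "v0 \<noteq> y" using v0(1) xS by blast+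
        then have av: "adj E v0 x" "adj E v0 y"
          using cl v0(2) xC unfolding clique_def by blast+
        then have "x \<in> nbhd V E v0" "y \<in> nbhd V E v0" using xy by (simp_all add: nbhd_def)
        then have Pv0: "e \<in> P v0" using xy unfolding P_def by blast
        have uniq: "v = v0" if th: "v \<in> S" "e \<in> P v" for v
        proof (rule ccontr)
          assume ne: "v \<noteq> v0"
          obtain x' y' where "x' \<in> nbhd V E v" "y' \<in> nbhd V E v" "e = {x',y'}"
            using th(2) unfolding P_def by blast
          then have "x \<in> nbhd V E v" "y \<in> nbhd V E v" using xy(4) by (auto simp: doubleton_eq_iff)
          then have "adj E v x" "adj E v y" unfolding nbhd_def by simp_all
          then have a1: "adj E x v" "adj E y v" using adj_sym by metis+
          have a2: "adj E x v0" "adj E y v0" using av adj_sym by metis+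
          have nv: "\<not> adj E v v0" using stS th(1) v0(1) unfolding stable_def by blast
          have vV: "v \<in> V" using th SV by blast
          have "x \<noteq> v" "x \<noteq> v0" "y \<noteq> v" "y \<noteq> v0" using xS th(1) v0(1) by auto
          then have ds: "distinct [x, y, v, v0]" using xy(1) ne by simp
          have "\<exists>a\<in>V. \<exists>b\<in>V. \<exists>c\<in>V. \<exists>d\<in>V. distinct [a, b, c, d] \<and>
            adj E a b \<and> adj E a c \<and> adj E a d \<and> adj E b c \<and> adj E b d \<and> \<not> adj E c d"
            apply (rule_tac x=x in bexI, rule_tac x=y in bexI, rule_tac x=v in bexI, rule_tac x=v0 in bexI)
                apply (intro conjI)
            apply (fact ds, fact axy, fact a1(1), fact a2(1), fact a1(2), fact a2(2), fact nv)
            apply (fact v0V, fact vV, fact xy(3), fact xy(2))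
            done
          then show False using assms(2) unfolding diamond_free_def by contradiction
        qed
        have "{v\<in>S. e \<in> P v} = {v0}" using uniq v0(1) Pv0 by blast
        then have "card {v\<in>S. e \<in> P v} = 1" by simp
        then show ?thesis unfolding countGS countDel using True by simp
      next
        case False
        have "{v\<in>S. e \<in> P v} = {}"
        proof (rule ccontr)
          assume "{v\<in>S. e \<in> P v} \<noteq> {}"
          then obtain v x y where v: "v \<in> S" "x \<noteq> y" "x \<in> nbhd V E v" "y \<in> nbhd V E v" "e = {x,y}"
            unfolding P_def by blast
          have "adj E x y" using Ssimp v by blast
          then have "e \<in> E" using v by (simp add: adj_def)
          moreover have "e \<inter> S = {}"
            using v stS unfolding stable_def by (auto simp: nbhd_def)
          ultimately show False using False by blast
        qed
        then have "card {v\<in>S. e \<in> P v} = 0" by (metis card.empty)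
        then show ?thesis unfolding countGS countDel using False by simp
      qed
    qed
  next
    assume eq: "GS_edges V E S = del_edges V E S"
    have Ssimp: "adj E x y" if v: "v \<in> S" and x: "x \<in> nbhd V E v" and y: "y \<in> nbhd V E v"
      and xy: "x \<noteq> y" for v x y
    proof -
      have "{x,y} \<in> P v" unfolding P_def using x y xy by blast
      then have "card {v\<in>S. {x,y} \<in> P v} > 0" using v finS by (auto simp: card_gt_0_iff)
      then have "count (del_edges V E S) {x,y} > 0" using countGS eq by metis
      then have "{x,y} \<in> E" using countDel by (simp split: if_splits)
      then show ?thesis using xy by (simp add: adj_def)
    qed
    have simpS: "simplicial_vertex V E v" if "v \<in> S" for v
      using simpl_of_nbhd_clique[of v V E] Ssimp that SV by blast
    show "edge_simplicial V E"
      unfolding edge_simplicial_def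
    proof
      fix e assume eE: "e \<in> E"
      then obtain x y where xy: "x \<noteq> y" "x \<in> V" "y \<in> V" "e = {x,y}"
        using graph_edge[OF assms(1)] by blast
      have axy: "adj E x y" using eE xy by (simp add: adj_def)
      show "\<exists>C. simplicial_clique V E C \<and> e \<subseteq> C"
      proof (cases "x \<in> S")
        case True
        then show ?thesis using simpS[OF True] axy xy
          by (auto simp: simplicial_clique_def cnbhd_def nbhd_def)
      next
        case xn: False
        show ?thesis
        proof (cases "y \<in> S")
          case True
          have "adj E y x" using axy adj_sym by metis
          then have "e \<subseteq> cnbhd V E y" using xy by (auto simp: cnbhd_def nbhd_def)
          then show ?thesis using simpS[OF True] by (auto simp: simplicial_clique_def)
        next
          case False
          have "count (del_edges V E S) e = 1" using countDel eE xy xn False by auto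
          then have "card {v\<in>S. e \<in> P v} > 0" using countGS eq by simp
          then obtain v where v: "v \<in> S" "e \<in> P v" by (auto simp: card_gt_0_iff)
          then have "e \<subseteq> cnbhd V E v" unfolding P_def cnbhd_def by auto
          then show ?thesis using simpS[OF v(1)] by (auto simp: simplicial_clique_def)
        qed
      qed
    qed
  qed
qed

end
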